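(* Under the hypotheses of Theorem 7.3 (positive integers $a,d,r,h,n$, $r\geq2$, $\gcd(a,d)=\gcd(a,r)=1$, $d>hn(r-1)$, $a_0=a$, $a_{k+1}=ha+r^kd$ for $0\leq k\leq n$, $\{a_0,\dots,a_{n+1}\}$ minimally generating $\mathfrak{S}_{n+2}$), let $\ell_0=0$, let $\ell_i$ ($1\leq i\leq a-1$) be the digit sum of the $r$-adic representation of $i$ up to order $n$, and $L=\max\{\ell_i\mid 1\leq i\leq a-1\}$. Let $M=\mathfrak{S}_{n+2}\setminus\{0\}$ and let $\omega_{s,t}$ be the Apéry table entries defined in the context. Then for $0\leq t\leq a-1$ and $0\leq s\leq L$: $$\omega_{s,t}=\begin{cases}\ell_tha+td & \text{if } 0\leq s\leq\ell_t,\\ \ell_tha+td+(s-\ell_t)a & \text{if } \ell_t<s\leq L.\end{cases}$$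
   Context: The $r$-adic representation of $i$ up to order $n$ is the unique expression $i=\sum_{k=0}^{n}\alpha_kr^k$ with nonnegative integers $\alpha_k$, $0\leq\alpha_k\leq r-1$ for $k\leq n-1$ and $\alpha_n$ unrestricted. For $n\geq1$, $nM=M+\cdots+M$ ($n$ copies). Apéry table entries: $\omega_{0,t}$ is the element of $\mathrm{Ap}(\mathfrak{S}_{n+2},a)$ congruent to $td$ modulo $a$ ($\omega_{0,0}=0$), and for $s\geq1$, $\omega_{s,t}$ is the smallest element of $sM$ congruent to $td$ modulo $a$. *)

theory Defs
  imports Main
begin

inductive_set semigroup_gen :: "nat set \<Rightarrow> nat set" for A :: "nat set" where
  zero: "0 \<in> semigroup_gen A"
| add: "x \<in> A \<Longrightarrow> y \<in> semigroup_gen A \<Longrightarrow> x + y \<in> semigroup_gen A"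

definition minimal_gens :: "nat set \<Rightarrow> bool" where
  "minimal_gens A \<longleftrightarrow> (\<forall>g\<in>A. g \<notin> semigroup_gen (A - {g}))"

definition gens :: "nat \<Rightarrow> nat \<Rightarrow> nat \<Rightarrow> nat \<Rightarrow> nat \<Rightarrow> nat set" where
  "gens a d r h n = {a} \<union> {h * a + r ^ k * d | k. k \<le> n}"

definition apery :: "nat set \<Rightarrow> nat \<Rightarrow> nat set" where
  "apery S a = {x \<in> S. \<not> (a \<le> x \<and> x - a \<in> S)}"

fun nfold :: "nat set \<Rightarrow> nat \<Rightarrow> nat set" where
  "nfold M 0 = {0}"
| "nfold M (Suc s) = {x + y | x y. x \<in> nfold M s \<and> y \<in> M}"

definition omega :: "nat set \<Rightarrow> nat \<Rightarrow> nat \<Rightarrow> nat \<Rightarrow> nat \<Rightarrow> nat" where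
  "omega S a d s t =
     (if s = 0 then (THE x. x \<in> apery S a \<and> x mod a = (t * d) mod a)
      else (LEAST x. x \<in> nfold (S - {0}) s \<and> x mod a = (t * d) mod a))"

definition radic_digit_sum :: "nat \<Rightarrow> nat \<Rightarrow> nat \<Rightarrow> nat" where
  "radic_digit_sum r n i = (\<Sum>k<n. (i div r ^ k) mod r) + i div r ^ n"

definition ell :: "nat \<Rightarrow> nat \<Rightarrow> nat \<Rightarrow> nat" where
  "ell r n i = (if i = 0 then 0 else radic_digit_sum r n i)"

end

theory Submission
  imports Defs "HOL-Number_Theory.Cong"
begin

fun lsum :: "nat \<Rightarrow> nat \<Rightarrow> nat \<Rightarrow> nat" where
  "lsum r 0 x = x"
| "lsum r (Suc N) x = x mod r + lsum r N (x div r)"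

inductive_set repr :: "nat \<Rightarrow> nat \<Rightarrow> (nat \<times> nat) set" for r N where
  rz: "(0,0) \<in> repr r N"
| rs: "(m,B) \<in> repr r N \<Longrightarrow> k \<le> N \<Longrightarrow> (m + r^k, Suc B) \<in> repr r N"

lemma ds_eq: "radic_digit_sum r N x = lsum r N x"
proof (induction N arbitrary: x)
  case 0
  then show ?case by (simp add: radic_digit_sum_def)
next
  case (Suc N)
  have "radic_digit_sum r (Suc N) x
      = x mod r + ((\<Sum>k<N. (x div r ^ Suc k) mod r) + x div r ^ Suc N)"
    unfolding radic_digit_sum_def by (simp only: sum.lessThan_Suc_shift) simp
  also have "\<dots> = x mod r + radic_digit_sum r N (x div r)"
    unfolding radic_digit_sum_def by (simp add: div_mult2_eq)
  finally show ?case using Suc by simp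
qed

lemma lsum_0: "lsum r N 0 = 0"
  by (induction N) auto

lemma lsum_add_pow:
  assumes "r \<ge> 2"
  shows "k \<le> N \<Longrightarrow> lsum r N (m + r^k) \<le> lsum r N m + 1"
proof (induction N arbitrary: m k)
  case 0
  then show ?case by simp
next
  case (Suc N)
  show ?case
  proof (cases k)
    case 0
    show ?thesis
    proof (cases "Suc (m mod r) = r")
      case True
      have "lsum r N (m div r + r^0) \<le> lsum r N (m div r) + 1"
        using Suc.IH[of 0] by simp
      then show ?thesis using True 0 by (simp add: mod_Suc div_Suc)
    next
      case False
      then show ?thesis using 0 by (simp add: mod_Suc div_Suc)
    qed
  next
    case (Suc k')
    have kk: "k' \<le> N" using Suc \<open>k \<le> Suc N\<close> by simp
    have r0: "r > 0" using assms by simp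
    have e1: "(m + r^k) mod r = m mod r" using Suc by simp
    have e2: "(m + r^k) div r = m div r + r^k'" using Suc r0 by simp
    show ?thesis using Suc.IH[OF kk, of "m div r"] e1 e2 by simp
  qed
qed

lemma repr_le:
  assumes "r \<ge> 1"
  shows "(m,B) \<in> repr r N \<Longrightarrow> m \<le> B * r^N"
proof (induction rule: repr.induct)
  case rz
  then show ?case by simp
next
  case (rs m B k)
  have "r^k \<le> r^N" using rs assms by (simp add: power_increasing)
  then show ?case using rs by simp
qed

lemma repr_lsum:
  assumes "r \<ge> 2"
  shows "(m,B) \<in> repr r N \<Longrightarrow> lsum r N m \<le> B"
proof (induction rule: repr.induct)
  case rz
  then show ?case by (simp add: lsum_0)
next
  case (rs m B k)
  then show ?case using lsum_add_pow[OF assms rs(2), of m] by simp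
qed

lemma repr_add:
  "(m2,B2) \<in> repr r N \<Longrightarrow> (m1,B1) \<in> repr r N \<Longrightarrow> (m1+m2, B1+B2) \<in> repr r N"
proof (induction rule: repr.induct)
  case rz
  then show ?case by simp
next
  case (rs m B k)
  then show ?case using repr.rs[of "m1+m" "B1+B" r N k] by (simp add: add.assoc)
qed

lemma repr_shift:
  "(y,B) \<in> repr r N \<Longrightarrow> (r*y, B) \<in> repr r (Suc N)"
proof (induction rule: repr.induct)
  case rz
  then show ?case using repr.rz by simp
next
  case (rs m B k)
  then show ?case using repr.rs[of "r*m" B r "Suc N" "Suc k"]
    by (simp add: distrib_left)
qed

lemma repr_ones: "(c, c) \<in> repr r N"
proof (induction c)
  case 0
  then show ?case using repr.rz by simp
next
  case (Suc c)
  then show ?case using repr.rs[of c c r N 0] by simp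
qed

lemma repr_lsum_ex: "(x, lsum r N x) \<in> repr r N"
proof (induction N arbitrary: x)
  case 0
  then show ?case using repr_ones by simp
next
  case (Suc N)
  have "(r * (x div r), lsum r N (x div r)) \<in> repr r (Suc N)"
    using repr_shift Suc by blast
  from repr_add[OF this repr_ones[of "x mod r" r "Suc N"]]
  show ?case by (simp add: add.commute)
qed

lemma sg_add_a:
  assumes "y \<in> semigroup_gen (gens a d r h n)"
  shows "c * a + y \<in> semigroup_gen (gens a d r h n)"
proof (induction c)
  case 0
  then show ?case using assms by simp
next
  case (Suc c)
  have "a \<in> gens a d r h n" by (simp add: gens_def)
  from semigroup_gen.add[OF this Suc]
  show ?case by (simp add: add.assoc)
qed

lemma sg_from0:
  "(m,B) \<in> repr r n \<Longrightarrow> h*B*a + m*d \<in> semigroup_gen (gens a d r h n)"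
proof (induction rule: repr.induct)
  case rz
  then show ?case using semigroup_gen.zero by simp
next
  case (rs m B k)
  have "h*a + r^k*d \<in> gens a d r h n" using rs(2) by (auto simp: gens_def)
  from semigroup_gen.add[OF this rs(3)]
  show ?case by (simp add: algebra_simps)
qed

lemma sg_from:
  "(m,B) \<in> repr r n \<Longrightarrow> (c + h*B)*a + m*d \<in> semigroup_gen (gens a d r h n)"
proof -
  assume A: "(m,B) \<in> repr r n"
  have "c * a + (h*B*a + m*d) \<in> semigroup_gen (gens a d r h n)"
    by (rule sg_add_a[OF sg_from0[OF A]])
  then show ?thesis by (simp add: algebra_simps)
qed

lemma sg_to:
  "x \<in> semigroup_gen (gens a d r h n) \<Longrightarrow>
     \<exists>c m B. (m,B) \<in> repr r n \<and> x = (c + h*B)*a + m*d"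
proof (induction rule: semigroup_gen.induct)
  case zero
  then show ?case using repr.rz by (intro exI[of _ 0]) auto
next
  case (add x y)
  then obtain c m B where cmB: "(m,B) \<in> repr r n" "y = (c + h*B)*a + m*d" by blast
  from add(1) consider "x = a" | k where "k \<le> n" "x = h*a + r^k*d"
    by (auto simp: gens_def)
  then show ?case
  proof cases
    case 1
    then show ?thesis using cmB by (intro exI[of _ "Suc c"] exI[of _ m] exI[of _ B]) auto
  next
    case 2
    then show ?thesis using cmB repr.rs[OF cmB(1) 2(1)]
      by (intro exI[of _ c] exI[of _ "m + r^k"] exI[of _ "Suc B"]) (auto simp: algebra_simps)
  qed
qed

lemma nfold_to:
  assumes "r \<ge> 1"
  shows "x \<in> nfold (semigroup_gen (gens a d r h n) - {0}) s \<Longrightarrow>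
     \<exists>c m B. (m,B) \<in> repr r n \<and> x = (c + h*B)*a + m*d \<and> s \<le> c + B"
proof (induction s arbitrary: x)
  case 0
  then show ?case using repr.rz by (intro exI[of _ 0]) auto
next
  case (Suc s)
  then obtain y z where yz: "x = y + z" "y \<in> nfold (semigroup_gen (gens a d r h n) - {0}) s"
    "z \<in> semigroup_gen (gens a d r h n)" "z \<noteq> 0" by auto
  from Suc.IH[OF yz(2)] obtain c m B where
    A: "(m,B) \<in> repr r n" "y = (c + h*B)*a + m*d" "s \<le> c + B" by blast
  from sg_to[OF yz(3)] obtain c2 m2 B2 where
    A2: "(m2,B2) \<in> repr r n" "z = (c2 + h*B2)*a + m2*d" by blast
  have "c2 + B2 \<ge> 1"
  proof (rule ccontr)
    assume "\<not> ?thesis"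
    then have "c2 = 0" "B2 = 0" by auto
    with repr_le[OF assms A2(1)] A2(2) yz(4) show False by simp
  qed
  then show ?case using repr_add[OF A2(1) A(1)] A A2 yz(1)
    by (intro exI[of _ "c+c2"] exI[of _ "m+m2"] exI[of _ "B+B2"]) (auto simp: algebra_simps)
qed

lemma nfold1: "nfold M (Suc 0) = M"
  by force

lemma nfold_SucI: "x \<in> nfold M s \<Longrightarrow> y \<in> M \<Longrightarrow> x + y \<in> nfold M (Suc s)"
  by auto

lemma nfold_from:
  assumes "a > 0" "d > 0" "r \<ge> 1" "h > 0"
  shows "(m,B) \<in> repr r n \<Longrightarrow> 1 \<le> s \<Longrightarrow> s \<le> c + B \<Longrightarrow>
     (c + h*B)*a + m*d \<in> nfold (semigroup_gen (gens a d r h n) - {0}) s"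
proof (induction s arbitrary: c m B)
  case 0
  then show ?case by simp
next
  case (Suc s)
  show ?case
  proof (cases "s = 0")
    case True
    have ne: "(c + h*B)*a + m*d \<noteq> 0"
    proof
      assume z: "(c + h*B)*a + m*d = 0"
      have "c + h*B > 0" using Suc.prems True assms by (cases B) auto
      then show False using z assms by simp
    qed
    have "(c + h*B)*a + m*d \<in> semigroup_gen (gens a d r h n)"
      by (rule sg_from[OF Suc.prems(1)])
    then have "(c + h*B)*a + m*d \<in> semigroup_gen (gens a d r h n) - {0}" using ne by simp
    then show ?thesis using True nfold1 by simp
  next
    case False
    show ?thesis
    proof (cases "c \<ge> 1")
      case True
      have IH: "(c - 1 + h*B)*a + m*d \<in> nfold (semigroup_gen (gens a d r h n) - {0}) s"
        using Suc.IH[OF Suc.prems(1)] Suc.prems False by simp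
      have "a \<in> semigroup_gen (gens a d r h n) - {0}"
        using sg_add_a[OF semigroup_gen.zero, of 1] assms by simp
      moreover have "(c + h*B)*a + m*d = ((c - 1 + h*B)*a + m*d) + a"
        using True by (cases c) (simp_all add: algebra_simps)
      ultimately show ?thesis using nfold_SucI[OF IH] by metis
    next
      case c0: False
      then have "c = 0" by simp
      then obtain B' where B': "B = Suc B'" using Suc.prems by (cases B) auto
      from Suc.prems(1) B' obtain m' k where mk: "m = m' + r^k" "k \<le> n" "(m', B') \<in> repr r n"
        by (cases rule: repr.cases) auto
      have IH: "(0 + h*B')*a + m'*d \<in> nfold (semigroup_gen (gens a d r h n) - {0}) s"
        using Suc.IH[OF mk(3), of 0] Suc.prems False \<open>c = 0\<close> B' by simp
      have "h*a + r^k*d \<in> gens a d r h n" using mk(2) by (auto simp: gens_def)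
      from semigroup_gen.add[OF this semigroup_gen.zero]
      have "h*a + r^k*d \<in> semigroup_gen (gens a d r h n) - {0}" using assms by simp
      moreover have "(c + h*B)*a + m*d = ((0 + h*B')*a + m'*d) + (h*a + r^k*d)"
        using \<open>c = 0\<close> B' mk(1) by (simp add: algebra_simps)
      ultimately show ?thesis using nfold_SucI[OF IH] by metis
    qed
  qed
qed

lemma lsum_bound: "r \<ge> 1 \<Longrightarrow> lsum r N x \<le> N*(r-1) + x div r^N"
proof (induction N arbitrary: x)
  case 0
  then show ?case by simp
next
  case (Suc N)
  have "x mod r \<le> r - 1"
  proof -
    have "x mod r < r" using Suc.prems by simp
    then show ?thesis by arith
  qed
  moreover have "x div r ^ Suc N = x div r div r^N" by (simp add: div_mult2_eq)
  ultimately show ?case using Suc.IH[OF Suc.prems, of "x div r"] by simp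
qed

lemma lower:
  assumes "a > 0" "r \<ge> 2" "h > 0" "coprime a d" "d > h*n*(r-1)"
    and R: "(m,B) \<in> repr r n" and "t < a"
    and md: "((c+h*B)*a + m*d) mod a = (t*d) mod a" and "s \<le> c + B"
  shows "lsum r n t * h * a + t*d + (s - lsum r n t)*a \<le> (c+h*B)*a + m*d"
proof -
  define l where "l = lsum r n t"
  have "(m*d) mod a = (t*d) mod a" using md by simp
  then have "[m*d = t*d] (mod a)" by (simp add: cong_def)
  then have "[m = t] (mod a)" using cong_mult_rcancel_nat assms(4)
    by (metis coprime_commute)
  then have mt: "m mod a = t" using \<open>t < a\<close> by (simp add: cong_def)
  then have tm: "t \<le> m" using mod_less_eq_dividend[of m a] by simp
  have mdec: "m = (m div a)*a + t" using mt div_mult_mod_eq[of m a] by simp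
  show ?thesis
  proof (cases "B \<ge> l")
    case True
    have "h*B = h*l + h*(B-l)" using True by (simp add: diff_mult_distrib2)
    moreover have "h*(B-l) \<ge> B - l" using assms(3) by simp
    moreover have "h*l = l*h" by simp
    ultimately have "c + h*B \<ge> l*h + (s - l)" using \<open>s \<le> c + B\<close> True by linarith
    then have "(l*h + (s-l))*a \<le> (c+h*B)*a" by (rule mult_right_mono) simp
    moreover have "t*d \<le> m*d" using tm by simp
    moreover have "(l*h + (s-l))*a = l*h*a + (s-l)*a" by (simp add: add_mult_distrib)
    ultimately show ?thesis unfolding l_def[symmetric] by linarith
  next
    case False
    have "m \<noteq> t" using False repr_lsum[OF assms(2) R] l_def by auto
    then have "m div a \<noteq> 0" using mdec by (metis add_0 mult_0)
    then have "(m div a)*a \<ge> a" by simp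
    then have "m \<ge> a + t" using mdec by linarith
    then have "(a+t)*d \<le> m*d" by (rule mult_le_mono1)
    then have "m*d \<ge> a*d + t*d" by (simp add: add_mult_distrib)
    have tB: "t \<le> B * r^n" using tm repr_le[OF _ R] assms(2) by fastforce
    have "t div r^n \<le> B"
      using div_le_mono[OF tB, of "r^n"] assms(2) by simp
    have "l \<le> n*(r-1) + t div r^n" using lsum_bound[of r n t] assms(2) l_def by simp
    then have "h*l \<le> h*(n*(r-1) + t div r^n)" by (rule mult_le_mono2)
    then have "h*l \<le> h*(n*(r-1)) + h*(t div r^n)" by (simp add: distrib_left)
    also have "\<dots> \<le> h*(n*(r-1)) + h*B" using \<open>t div r^n \<le> B\<close> by simp
    finally have "h*l < d + h*B" using assms(5) by (simp add: mult.assoc)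
    then have "l*h + (s-l) \<le> c + h*B + d" using \<open>s \<le> c + B\<close> False by (simp add: mult.commute)
    then have "(l*h + (s-l))*a \<le> (c + h*B + d)*a" by (rule mult_right_mono) simp
    then show ?thesis using \<open>m*d \<ge> a*d + t*d\<close> unfolding l_def[symmetric]
      by (simp add: algebra_simps)
  qed
qed

theorem theorem7p5:
  fixes a d r h n :: nat
  assumes "a > 0" "d > 0" "r \<ge> 2" "h > 0" "n > 0"
    and "coprime a d" "coprime a r"
    and "d > h * n * (r - 1)"
    and "minimal_gens (gens a d r h n)"
  defines "S \<equiv> semigroup_gen (gens a d r h n)"
    and "L \<equiv> Max {ell r n i | i. 1 \<le> i \<and> i \<le> a - 1}"
  shows "\<forall>t s. t \<le> a - 1 \<and> s \<le> L \<longrightarrow>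
           omega S a d s t =
             (if s \<le> ell r n t then ell r n t * h * a + t * d
              else ell r n t * h * a + t * d + (s - ell r n t) * a)"
proof (intro allI impI)
  fix t s assume ts: "t \<le> a - 1 \<and> s \<le> L"
  then have ta: "t < a" using assms(1) by linarith
  define l where "l = lsum r n t"
  have ell: "ell r n t = l" by (simp add: ell_def ds_eq lsum_0 l_def)
  define V where "V = l*h*a + t*d + (s-l)*a"
  have rhs: "(if s \<le> ell r n t then ell r n t * h * a + t * d
              else ell r n t * h * a + t * d + (s - ell r n t) * a) = V"
    by (simp add: V_def ell)
  have Vrep: "V = ((s - l) + h*l)*a + t*d" by (simp add: V_def add_mult_distrib2 mult.commute mult.left_commute)
  have R: "(t, l) \<in> repr r n" using repr_lsum_ex l_def by simp
  have Vmod: "V mod a = (t*d) mod a" unfolding Vrep by simp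
  have lowS: "l*h*a + t*d \<le> y" if "y \<in> S" "y mod a = (t*d) mod a" for y
  proof -
    from sg_to[OF that(1)[unfolded S_def]] obtain c m B where
      cmB: "(m,B) \<in> repr r n" "y = (c + h*B)*a + m*d" by blast
    from lower[OF assms(1,3,4,6,8) cmB(1) ta, of c 0] that(2) cmB(2) l_def
    show ?thesis by simp
  qed
  show "omega S a d s t = (if s \<le> ell r n t then ell r n t * h * a + t * d
              else ell r n t * h * a + t * d + (s - ell r n t) * a)"
    unfolding rhs
  proof (cases "s = 0")
    case True
    then have V0: "V = l*h*a + t*d" by (simp add: V_def)
    have VS: "V \<in> S" unfolding Vrep S_def by (rule sg_from[OF R])
    have "(THE x. x \<in> apery S a \<and> x mod a = (t * d) mod a) = V"
    proof (rule the_equality)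
      show "V \<in> apery S a \<and> V mod a = t * d mod a"
      proof -
        have "\<not> (a \<le> V \<and> V - a \<in> S)"
        proof
          assume A: "a \<le> V \<and> V - a \<in> S"
          then have "(V - a) mod a = V mod a" by (simp add: mod_if)
          then have "V \<le> V - a" using lowS[of "V - a"] A Vmod V0 by simp
          then show False using A assms(1) by linarith
        qed
        then show ?thesis using VS Vmod by (simp add: apery_def)
      qed
    next
      fix x assume x: "x \<in> apery S a \<and> x mod a = t * d mod a"
      then have xS: "x \<in> S" and xn: "\<not> (a \<le> x \<and> x - a \<in> S)" by (auto simp: apery_def)
      have Vx: "V \<le> x" using lowS[OF xS] x V0 by simp
      show "x = V"
      proof (rule ccontr)
        assume "x \<noteq> V"
        then have lt: "V < x" using Vx by simp
        have "x mod a = V mod a" using x Vmod by simp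
        then have "a dvd x - V" using Vx by (simp add: mod_eq_dvd_iff_nat)
        then obtain k where k: "x - V = a*k" by (auto elim: dvdE)
        then have "k \<noteq> 0" using lt by (metis mult_0_right zero_less_diff less_irrefl)
        then have "x - a = (k - 1)*a + V" using k lt
          by (cases k) (auto simp: algebra_simps)
        moreover have "(k - 1)*a + V \<in> S" unfolding S_def
          using sg_add_a VS[unfolded S_def] by blast
        moreover have "a \<le> x" using k \<open>k \<noteq> 0\<close> lt
        proof -
          have "a \<le> a*k" using \<open>k \<noteq> 0\<close> by simp
          then show ?thesis using k lt by linarith
        qed
        ultimately show False using xn by simp
      qed
    qed
    then show "omega S a d s t = V" using True by (simp add: omega_def)
  next
    case False
    have "(LEAST x. x \<in> nfold (S - {0}) s \<and> x mod a = (t * d) mod a) = V"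
    proof (rule Least_equality)
      have "V \<in> nfold (S - {0}) s" unfolding Vrep S_def
        by (rule nfold_from[OF assms(1,2) _ assms(4) R]) (use False assms(3) in auto)
      then show "V \<in> nfold (S - {0}) s \<and> V mod a = t * d mod a" using Vmod by simp
    next
      fix y assume y: "y \<in> nfold (S - {0}) s \<and> y mod a = t * d mod a"
      from nfold_to[of r y a d h n s] y assms(3) obtain c m B where
        cmB: "(m,B) \<in> repr r n" "y = (c + h*B)*a + m*d" "s \<le> c + B"
        unfolding S_def by auto
      from lower[OF assms(1,3,4,6,8) cmB(1) ta, of c s] y cmB l_def
      show "V \<le> y" by (simp add: V_def)
    qed
    then show "omega S a d s t = V" using False by (simp add: omega_def)
  qed
qed

end
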